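(* For $u_1,\dots,u_k\in\mathcal B$ let $R'(u_1,\dots,u_k)=\sum_{n=0}^\infty\sum_{j\in\{1,\dots,k\}^n}R'[u_{j(1)},\dots,u_{j(n)}]$ (formal series). Then for every $v\in\mathcal B$, $R'(u_1,\dots,u_k)v=v+R'(u_1,\dots,u_k)\Big(\gamma\Big[\big(\textstyle\sum_{i=1}^ku_i\big)\,R'(u_1,\dots,u_k)\big(\textstyle\sum_{j=1}^ku_j\big)\Big]v\Big)+R'(u_1,\dots,u_k)\Big(\textstyle\sum_{i=1}^k\Lambda(u_i\otimes v)\Big)$, as formal series.
   Context: Let $\mathcal B$ be a unital $*$-algebra with star-linear maps $\gamma:\mathcal B\to\mathcal B$ and $\Lambda:\mathcal B\otimes_{alg}\mathcal B\to\mathcal B$. The linear operators $R'[u_1,\dots,u_m]$ on $\mathcal B$ ($m\ge0$) are defined recursively: $R'[\emptyset]=\mathrm{id}_{\mathcal B}$, and $R'[u_1,\dots,u_m]=\sum_{\pi\in\mathrm{Int}(m)}w(V_1)\circ\cdots\circ w(V_r)$, where $\mathrm{Int}(m)$ is the set of interval partitions of $\{1,\dots,m\}$, $V_1,\dots,V_r$ are the blocks of $\pi$ from left to right, $w(\{i\})$ is $v\mapsto\Lambda(u_i\otimes v)$, and for a block $V=\{p,\dots,q\}$ with $q>p$, $w(V)$ is left multiplication by $\gamma\big[u_p\,R'[u_{p+1},\dots,u_{q-1}](u_q)\big]$. *)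

theory Defs
  imports Complex_Main
begin

definition star_algebra :: "(complex \<Rightarrow> 'a::{ring,monoid_mult} \<Rightarrow> 'a) \<Rightarrow> ('a \<Rightarrow> 'a) \<Rightarrow> bool" where
  "star_algebra sc st \<longleftrightarrow>
     (\<forall>a b x. sc (a + b) x = sc a x + sc b x) \<and>
     (\<forall>a x y. sc a (x + y) = sc a x + sc a y) \<and>
     (\<forall>a b x. sc (a * b) x = sc a (sc b x)) \<and>
     (\<forall>x. sc 1 x = x) \<and>
     (\<forall>a x y. sc a (x * y) = sc a x * y \<and> sc a (x * y) = x * sc a y) \<and>
     (\<forall>x. st (st x) = x) \<and>
     (\<forall>x y. st (x + y) = st x + st y) \<and>
     (\<forall>a x. st (sc a x) = sc (cnj a) (st x)) \<and>
     (\<forall>x y. st (x * y) = st y * st x)"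

definition star_linear :: "(complex \<Rightarrow> 'a::{ring,monoid_mult} \<Rightarrow> 'a) \<Rightarrow> ('a \<Rightarrow> 'a) \<Rightarrow> ('a \<Rightarrow> 'a) \<Rightarrow> bool" where
  "star_linear sc st f \<longleftrightarrow>
     (\<forall>x y. f (x + y) = f x + f y) \<and> (\<forall>a x. f (sc a x) = sc a (f x)) \<and>
     (\<forall>x. f (st x) = st (f x))"

text \<open>A star-linear map on the algebraic tensor product B \<otimes> B, represented (via the
  universal property) by the bilinear map L with L x y = \<Lambda>(x \<otimes> y); the involution
  on B \<otimes> B is (x \<otimes> y)* = x* \<otimes> y*.\<close>
definition star_bilinear :: "(complex \<Rightarrow> 'a::{ring,monoid_mult} \<Rightarrow> 'a) \<Rightarrow> ('a \<Rightarrow> 'a) \<Rightarrow> ('a \<Rightarrow> 'a \<Rightarrow> 'a) \<Rightarrow> bool" where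
  "star_bilinear sc st L \<longleftrightarrow>
     (\<forall>x y z. L (x + y) z = L x z + L y z) \<and> (\<forall>x y z. L x (y + z) = L x y + L x z) \<and>
     (\<forall>a x y. L (sc a x) y = sc a (L x y)) \<and> (\<forall>a x y. L x (sc a y) = sc a (L x y)) \<and>
     (\<forall>x y. L (st x) (st y) = st (L x y))"

definition interval_partitions :: "'b list \<Rightarrow> 'b list list set" where
  "interval_partitions us = {bs. concat bs = us \<and> (\<forall>b\<in>set bs. b \<noteq> [])}"

fun compose_all :: "('a \<Rightarrow> 'a) list \<Rightarrow> 'a \<Rightarrow> 'a" where
  "compose_all [] = id"
| "compose_all (f # fs) = f \<circ> compose_all fs"

function Rp :: "('a::{ring,monoid_mult} \<Rightarrow> 'a) \<Rightarrow> ('a \<Rightarrow> 'a \<Rightarrow> 'a) \<Rightarrow> 'a list \<Rightarrow> 'a \<Rightarrow> 'a" where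
  "Rp \<gamma> L us =
    (if us = [] then id
     else (\<lambda>v. \<Sum>bs\<in>interval_partitions us.
             compose_all (map (\<lambda>b. if length b = 1 then (\<lambda>w. L (hd b) w)
                                   else (\<lambda>w. \<gamma> (hd b * Rp \<gamma> L (butlast (tl b)) (last b)) * w)) bs) v))"
  by pat_completeness auto
termination
proof (relation "measure (\<lambda>(\<gamma>, L, us). length us)")
  show "wf (measure (\<lambda>(\<gamma>, L, us). length us))" by simp
next
  fix \<gamma> L and us :: "'a list" and v bs b
  assume "us \<noteq> []" "bs \<in> interval_partitions us" "b \<in> set bs"
  then have "length b \<le> length us"
  proof -
    assume h: "us \<noteq> []" "bs \<in> interval_partitions us" "b \<in> set bs"
    then have "concat bs = us" by (simp add: interval_partitions_def)
    moreover obtain xs ys where "bs = xs @ b # ys" using h(3) by (meson split_list)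
    ultimately show ?thesis by auto
  qed
  moreover assume "length b \<noteq> 1"
  ultimately show "((\<gamma>, L, butlast (tl b)), \<gamma>, L, us) \<in> measure (\<lambda>(\<gamma>, L, us). length us)"
    using \<open>us \<noteq> []\<close> by (cases us) auto
qed

declare Rp.simps[simp del]

text \<open>Degree-n homogeneous part of the formal series
  R'(u_1,...,u_k) = \<Sum>_n \<Sum>_{j \<in> {1..k}^n} R'[u_{j(1)},...,u_{j(n)}], applied to v.\<close>
definition Rdeg :: "('a::{ring,monoid_mult} \<Rightarrow> 'a) \<Rightarrow> ('a \<Rightarrow> 'a \<Rightarrow> 'a) \<Rightarrow> (nat \<Rightarrow> 'a) \<Rightarrow> nat \<Rightarrow> nat \<Rightarrow> 'a \<Rightarrow> 'a" where
  "Rdeg \<gamma> L u k n v = (\<Sum>js\<in>{js. length js = n \<and> set js \<subseteq> {1..k}}. Rp \<gamma> L (map u js) v)"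

end

theory Submission
  imports Defs
begin

lemma add_sum:
  fixes f :: "'a::ab_group_add \<Rightarrow> 'b::ab_group_add"
  assumes "\<And>x y. f (x + y) = f x + f y"
  shows "f (sum g A) = (\<Sum>x\<in>A. f (g x))"
proof -
  have z: "f 0 = 0" using assms[of 0 0] by simp
  show ?thesis
  proof (cases "finite A")
    case True then show ?thesis by (induction A rule: finite_induct) (auto simp: z assms)
  qed (simp add: z)
qed

definition blk :: "('a::{ring,monoid_mult} \<Rightarrow> 'a) \<Rightarrow> ('a \<Rightarrow> 'a \<Rightarrow> 'a) \<Rightarrow> 'a list \<Rightarrow> 'a \<Rightarrow> 'a" where
  "blk \<gamma> L b = (if length b = 1 then (\<lambda>w. L (hd b) w)
                  else (\<lambda>w. \<gamma> (hd b * Rp \<gamma> L (butlast (tl b)) (last b)) * w))"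

lemma IP_Nil: "interval_partitions [] = {[]}"
  unfolding interval_partitions_def by auto

lemma IP_split:
  assumes "us \<noteq> []"
  shows "interval_partitions us =
    (\<Union>i<length us. (\<lambda>bs. bs @ [drop i us]) ` interval_partitions (take i us))"
proof
  show "interval_partitions us \<subseteq> (\<Union>i<length us. (\<lambda>bs. bs @ [drop i us]) ` interval_partitions (take i us))"
  proof
    fix bs assume bs: "bs \<in> interval_partitions us"
    then have c: "concat bs = us" and ne: "\<forall>b\<in>set bs. b \<noteq> []"
      by (auto simp: interval_partitions_def)
    have "bs \<noteq> []" using c assms by auto
    then obtain bs' b where e: "bs = bs' @ [b]" by (metis rev_exhaust)
    define i where "i = length (concat bs')"
    have bne: "b \<noteq> []" using ne e by auto
    have us: "us = concat bs' @ b" using c e by simp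
    have il: "i < length us" using bne us i_def by simp
    have t: "take i us = concat bs'" and d: "drop i us = b" using us i_def by auto
    have "bs' \<in> interval_partitions (take i us)"
      using t ne e by (auto simp: interval_partitions_def)
    then show "bs \<in> (\<Union>i<length us. (\<lambda>bs. bs @ [drop i us]) ` interval_partitions (take i us))"
      using il d e by blast
  qed
next
  show "(\<Union>i<length us. (\<lambda>bs. bs @ [drop i us]) ` interval_partitions (take i us)) \<subseteq> interval_partitions us"
  proof
    fix bs assume "bs \<in> (\<Union>i<length us. (\<lambda>bs. bs @ [drop i us]) ` interval_partitions (take i us))"
    then obtain i bs' where i: "i < length us" and b: "bs' \<in> interval_partitions (take i us)"
      and e: "bs = bs' @ [drop i us]" by blast
    have c: "concat bs' = take i us" and ne: "\<forall>b\<in>set bs'. b \<noteq> []"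
      using b by (simp_all add: interval_partitions_def)
    have "concat bs = us" using c e by simp
    moreover have "drop i us \<noteq> []" using i by simp
    ultimately show "bs \<in> interval_partitions us"
      using ne e unfolding interval_partitions_def by auto
  qed
qed

lemma finite_IP: "finite (interval_partitions us)"
proof (induction "length us" arbitrary: us rule: less_induct)
  case less
  show ?case
  proof (cases "us = []")
    case True then show ?thesis by (simp add: IP_Nil)
  next
    case False
    have "\<forall>i<length us. finite (interval_partitions (take i us))"
      using less by simp
    then show ?thesis by (simp add: IP_split[OF False])
  qed
qed

lemma compose_all_append: "compose_all (fs @ gs) = compose_all fs \<circ> compose_all gs"
  by (induction fs) auto

lemma Rp_eq: "Rp \<gamma> L us v = (\<Sum>bs\<in>interval_partitions us. compose_all (map (blk \<gamma> L) bs) v)"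
  unfolding blk_def by (subst Rp.simps) (auto simp: IP_Nil)

lemma Rp_split:
  assumes "us \<noteq> []"
  shows "Rp \<gamma> L us v = (\<Sum>i<length us. Rp \<gamma> L (take i us) (blk \<gamma> L (drop i us) v))"
proof -
  have "Rp \<gamma> L us v = (\<Sum>i<length us. \<Sum>bs\<in>(\<lambda>bs. bs @ [drop i us]) ` interval_partitions (take i us).
          compose_all (map (blk \<gamma> L) bs) v)"
    unfolding Rp_eq IP_split[OF assms]
  proof (rule sum.UNION_disjoint)
    show "\<forall>i\<in>{..<length us}. \<forall>j\<in>{..<length us}. i \<noteq> j \<longrightarrow>
      (\<lambda>bs. bs @ [drop i us]) ` interval_partitions (take i us) \<inter>
      (\<lambda>bs. bs @ [drop j us]) ` interval_partitions (take j us) = {}"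
    proof (intro ballI impI)
      fix i j assume ij: "i \<in> {..<length us}" "j \<in> {..<length us}" "i \<noteq> j"
      show "(\<lambda>bs. bs @ [drop i us]) ` interval_partitions (take i us) \<inter>
      (\<lambda>bs. bs @ [drop j us]) ` interval_partitions (take j us) = {}"
      proof (rule ccontr)
        assume "\<not> ?thesis"
        then obtain a b where "a @ [drop i us] = b @ [drop j us]" by auto
        then have "length (drop i us) = length (drop j us)" by simp
        then show False using ij by auto
      qed
    qed
  qed (auto simp: finite_IP)
  also have "\<dots> = (\<Sum>i<length us. Rp \<gamma> L (take i us) (blk \<gamma> L (drop i us) v))"
  proof (rule sum.cong[OF refl])
    fix i
    have "inj_on (\<lambda>bs. bs @ [drop i us]) (interval_partitions (take i us))"
      by (rule inj_onI) simp
    then show "(\<Sum>bs\<in>(\<lambda>bs. bs @ [drop i us]) ` interval_partitions (take i us).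
          compose_all (map (blk \<gamma> L) bs) v) = Rp \<gamma> L (take i us) (blk \<gamma> L (drop i us) v)"
      by (simp add: sum.reindex Rp_eq compose_all_append)
  qed
  finally show ?thesis .
qed

lemma compose_all_add:
  assumes "\<forall>f\<in>set fs. \<forall>x y. f (x + y) = f x + (f y :: 'a::ab_group_add)"
  shows "compose_all fs (x + y) = compose_all fs x + compose_all fs y"
  using assms by (induction fs) auto

lemma Rp_add:
  assumes "\<forall>a x y. L a (x + y) = L a x + L a y"
  shows "Rp \<gamma> L us (x + y) = Rp \<gamma> L us x + Rp \<gamma> L us y"
proof -
  have "\<forall>b x y. blk \<gamma> L b (x + y) = blk \<gamma> L b x + blk \<gamma> L b y"
    using assms by (auto simp: blk_def distrib_left)
  then show ?thesis unfolding Rp_eq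
    by (simp add: compose_all_add sum.distrib)
qed

definition Wd :: "nat \<Rightarrow> nat \<Rightarrow> nat list set" where
  "Wd k n = {js. length js = n \<and> set js \<subseteq> {1..k}}"

lemma finite_Wd: "finite (Wd k n)"
proof -
  have "finite {js. set js \<subseteq> {1..k} \<and> length js = n}"
    by (rule finite_lists_length_eq) simp
  then show ?thesis unfolding Wd_def by (simp add: conj_commute)
qed

lemma sum_Wd_append:
  "(\<Sum>js\<in>Wd k (a + b). f js) = (\<Sum>xs\<in>Wd k a. \<Sum>ys\<in>Wd k b. f (xs @ ys))"
proof -
  have bij: "bij_betw (\<lambda>(xs, ys). xs @ ys) (Wd k a \<times> Wd k b) (Wd k (a + b))"
  proof (rule bij_betw_imageI)
    show "inj_on (\<lambda>(xs, ys). xs @ ys) (Wd k a \<times> Wd k b)"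
    proof (rule inj_onI)
      fix p q assume "p \<in> Wd k a \<times> Wd k b" "q \<in> Wd k a \<times> Wd k b"
        "(case p of (xs, ys) \<Rightarrow> xs @ ys) = (case q of (xs, ys) \<Rightarrow> xs @ ys)"
      then show "p = q"
        by (cases p, cases q) (simp add: Wd_def append_eq_append_conv)
    qed
    show "(\<lambda>(xs, ys). xs @ ys) ` (Wd k a \<times> Wd k b) = Wd k (a + b)"
    proof
      show "(\<lambda>(xs, ys). xs @ ys) ` (Wd k a \<times> Wd k b) \<subseteq> Wd k (a + b)"
        unfolding Wd_def by auto (meson atLeastAtMost_iff subsetD)+
      show "Wd k (a + b) \<subseteq> (\<lambda>(xs, ys). xs @ ys) ` (Wd k a \<times> Wd k b)"
      proof
        fix js assume js: "js \<in> Wd k (a + b)"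
        have "take a js \<in> Wd k a" "drop a js \<in> Wd k b"
          using js by (auto simp: Wd_def dest: in_set_takeD in_set_dropD)
        moreover have "js = take a js @ drop a js" by simp
        ultimately show "js \<in> (\<lambda>(xs, ys). xs @ ys) ` (Wd k a \<times> Wd k b)"
          by (intro image_eqI[where x="(take a js, drop a js)"]) auto
      qed
    qed
  qed
  have "(\<Sum>js\<in>Wd k (a + b). f js) = (\<Sum>p\<in>Wd k a \<times> Wd k b. f (case p of (xs, ys) \<Rightarrow> xs @ ys))"
    using sum.reindex_bij_betw[OF bij, of f] by simp
  also have "\<dots> = (\<Sum>xs\<in>Wd k a. \<Sum>ys\<in>Wd k b. f (xs @ ys))"
    by (subst sum.cartesian_product) (simp add: case_prod_unfold)
  finally show ?thesis .
qed

lemma sum_Wd_1: "(\<Sum>js\<in>Wd k 1. f js) = (\<Sum>j=1..k. f [j])"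
proof -
  have "Wd k 1 = (\<lambda>j. [j]) ` {1..k}"
  proof
    show "Wd k 1 \<subseteq> (\<lambda>j. [j]) ` {1..k}"
    proof
      fix js assume "js \<in> Wd k 1"
      then obtain j where "js = [j]" "j \<in> {1..k}" unfolding Wd_def
        by (auto simp: length_Suc_conv)
      then show "js \<in> (\<lambda>j. [j]) ` {1..k}" by auto
    qed
  qed (auto simp: Wd_def)
  moreover have "inj_on (\<lambda>j::nat. [j]) {1..k}" by (simp add: inj_on_def)
  ultimately show ?thesis by (simp add: sum.reindex)
qed

lemma Rdeg_Wd: "Rdeg \<gamma> L u k n v = (\<Sum>js\<in>Wd k n. Rp \<gamma> L (map u js) v)"
  unfolding Rdeg_def Wd_def ..

theorem corollary3p14:
  fixes sc :: "complex \<Rightarrow> 'a::{ring,monoid_mult} \<Rightarrow> 'a" and st :: "'a \<Rightarrow> 'a"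
    and \<gamma> :: "'a \<Rightarrow> 'a" and L :: "'a \<Rightarrow> 'a \<Rightarrow> 'a"
    and u :: "nat \<Rightarrow> 'a" and k n :: nat and v :: 'a
  assumes "star_algebra sc st" and "star_linear sc st \<gamma>" and "star_bilinear sc st L"
  shows "Rdeg \<gamma> L u k n v =
           (if n = 0 then v else 0)
         + (\<Sum>a<n - 1. Rdeg \<gamma> L u k a
              (\<gamma> ((\<Sum>i=1..k. u i) * Rdeg \<gamma> L u k (n - 2 - a) (\<Sum>j=1..k. u j)) * v))
         + (if n = 0 then 0 else Rdeg \<gamma> L u k (n - 1) (\<Sum>i=1..k. L (u i) v))"
proof -
  have Ladd: "\<forall>a x y. L a (x + y) = L a x + L a y"
    using assms(3) by (simp add: star_bilinear_def)
  have Gadd: "\<And>x y. \<gamma> (x + y) = \<gamma> x + \<gamma> y"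
    using assms(2) by (simp add: star_linear_def)
  have Ls: "\<And>a g A. L a (sum g A) = (\<Sum>x\<in>A. L a (g x))"
    by (rule add_sum) (use Ladd in blast)
  have Gs: "\<And>g A. \<gamma> (sum g A) = (\<Sum>x\<in>A. \<gamma> (g x))"
    by (rule add_sum) (rule Gadd)
  have RS: "\<And>us g A. Rp \<gamma> L us (sum g A) = (\<Sum>x\<in>A. Rp \<gamma> L us (g x))"
    by (rule add_sum) (rule Rp_add[OF Ladd])
  have Rnil: "\<And>w. Rp \<gamma> L [] w = w" by (simp add: Rp.simps)
  show ?thesis
  proof (cases n)
    case 0
    have "Wd k 0 = {[]}" by (auto simp: Wd_def)
    then show ?thesis using 0 by (simp add: Rdeg_Wd Rnil)
  next
    case (Suc m)
    define F where "F i js = Rp \<gamma> L (take i (map u js)) (blk \<gamma> L (drop i (map u js)) v)" for i js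
    have "Rdeg \<gamma> L u k n v = (\<Sum>js\<in>Wd k (Suc m). \<Sum>i<Suc m. F i js)"
      unfolding Rdeg_Wd Suc F_def
    proof (rule sum.cong[OF refl])
      fix js assume "js \<in> Wd k (Suc m)"
      then have len: "length (map u js) = Suc m" by (simp add: Wd_def)
      show "Rp \<gamma> L (map u js) v = (\<Sum>i<Suc m. Rp \<gamma> L (take i (map u js)) (blk \<gamma> L (drop i (map u js)) v))"
      proof -
        have ne: "map u js \<noteq> []" using len by auto
        show ?thesis using Rp_split[OF ne, of \<gamma> L v] len by simp
      qed
    qed
    also have "\<dots> = (\<Sum>i<m. \<Sum>js\<in>Wd k (Suc m). F i js) + (\<Sum>js\<in>Wd k (Suc m). F m js)"
      by (simp add: sum.distrib sum.swap[of _ _ "{..<m}"])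
    also have "(\<Sum>js\<in>Wd k (Suc m). F m js) = Rdeg \<gamma> L u k m (\<Sum>i=1..k. L (u i) v)"
    proof -
      have "(\<Sum>js\<in>Wd k (Suc m). F m js) = (\<Sum>xs\<in>Wd k m. \<Sum>j=1..k. F m (xs @ [j]))"
        unfolding Suc_eq_plus1 sum_Wd_append sum_Wd_1 by simp
      also have "\<dots> = (\<Sum>xs\<in>Wd k m. Rp \<gamma> L (map u xs) (\<Sum>j=1..k. L (u j) v))"
      proof (rule sum.cong[OF refl])
        fix xs assume "xs \<in> Wd k m"
        then have "length xs = m" by (simp add: Wd_def)
        then show "(\<Sum>j=1..k. F m (xs @ [j])) = Rp \<gamma> L (map u xs) (\<Sum>j=1..k. L (u j) v)"
          by (simp add: F_def RS blk_def)
      qed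
      finally show ?thesis by (simp add: Rdeg_Wd)
    qed
    also have "(\<Sum>i<m. \<Sum>js\<in>Wd k (Suc m). F i js) =
       (\<Sum>a<m. Rdeg \<gamma> L u k a (\<gamma> ((\<Sum>i=1..k. u i) * Rdeg \<gamma> L u k (m - 1 - a) (\<Sum>j=1..k. u j)) * v))"
    proof (rule sum.cong[OF refl])
      fix i assume "i \<in> {..<m}"
      then have e: "Suc m = i + (1 + ((m - 1 - i) + 1))" by auto
      have "(\<Sum>js\<in>Wd k (Suc m). F i js) =
         (\<Sum>xs\<in>Wd k i. \<Sum>p=1..k. \<Sum>ys\<in>Wd k (m - 1 - i). \<Sum>q=1..k. F i (xs @ [p] @ ys @ [q]))"
        unfolding e sum_Wd_append sum_Wd_1 by simp
      also have "\<dots> = (\<Sum>xs\<in>Wd k i. \<Sum>p=1..k. \<Sum>ys\<in>Wd k (m - 1 - i). \<Sum>q=1..k.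
            Rp \<gamma> L (map u xs) (\<gamma> (u p * Rp \<gamma> L (map u ys) (u q)) * v))"
      proof (intro sum.cong refl)
        fix xs p ys q assume "xs \<in> Wd k i"
        then have "length xs = i" by (simp add: Wd_def)
        then show "F i (xs @ [p] @ ys @ [q]) = Rp \<gamma> L (map u xs) (\<gamma> (u p * Rp \<gamma> L (map u ys) (u q)) * v)"
          by (simp add: F_def blk_def butlast_append)
      qed
      also have "\<dots> = Rdeg \<gamma> L u k i (\<gamma> ((\<Sum>i=1..k. u i) * Rdeg \<gamma> L u k (m - 1 - i) (\<Sum>j=1..k. u j)) * v)"
        unfolding Rdeg_Wd
        by (simp only: sum_distrib_left sum_distrib_right RS Gs) (rule sum.cong[OF refl], subst sum.swap, rule sum.cong[OF refl], rule sum.swap)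
      finally show "(\<Sum>js\<in>Wd k (Suc m). F i js) =
         Rdeg \<gamma> L u k i (\<gamma> ((\<Sum>i=1..k. u i) * Rdeg \<gamma> L u k (m - 1 - i) (\<Sum>j=1..k. u j)) * v)" .
    qed
    finally show ?thesis using Suc by simp
  qed
qed

end
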